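(* For every integer $k\ge2$, $\inf_{x\in\Delta^{d-1}}F^k(x)=12\cdot3^{k-1}-3$, and this value is attained at the barycenter $x=(1/d,\dots,1/d)$.
   Context: Fix $k\ge2$ and $d=4\cdot3^{k-1}$. $\Delta^{d-1}=\{x\in\mathbb{R}^d: x_i>0,\ \sum_i x_i=1\}$. For $j=1,2,3,4$, $I_j=\{(j-1)3^{k-1}+1,\dots,j\cdot3^{k-1}\}$ and $\Sigma_j(x)=\sum_{l\in I_j}x_l$. Let $\sigma(t)=(1-t)/t$. For $i\in\{1,\dots,d\}$ let $j(i)=1,4,3,2$ according as $i\equiv0,1,2,3\pmod4$, $f_i(x)=\sigma(\Sigma_{j(i)}(x))\sigma(x_i)$, and $F^k(x)=\max_{1\le i\le d}f_i(x)$. *)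

theory Defs
  imports Complex_Main
begin

definition dimk :: "nat \<Rightarrow> nat" where
  "dimk k = 4 * 3 ^ (k - 1)"

text \<open>The open simplex, vectors represented as functions nat => real on indices 1..d.\<close>
definition simplex :: "nat \<Rightarrow> (nat \<Rightarrow> real) set" where
  "simplex k = {x. (\<forall>i\<in>{1..dimk k}. x i > 0) \<and> (\<Sum>i=1..dimk k. x i) = 1}"

definition blocksum :: "nat \<Rightarrow> (nat \<Rightarrow> real) \<Rightarrow> nat \<Rightarrow> real" where
  "blocksum k x j = (\<Sum>l=(j-1)*3^(k-1)+1..j*3^(k-1). x l)"

definition sigma :: "real \<Rightarrow> real" where
  "sigma t = (1 - t) / t"

definition jidx :: "nat \<Rightarrow> nat" where
  "jidx i = (if i mod 4 = 0 then 1 else if i mod 4 = 1 then 4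
             else if i mod 4 = 2 then 3 else 2)"

definition fcomp :: "nat \<Rightarrow> (nat \<Rightarrow> real) \<Rightarrow> nat \<Rightarrow> real" where
  "fcomp k x i = sigma (blocksum k x (jidx i)) * sigma (x i)"

definition Fk :: "nat \<Rightarrow> (nat \<Rightarrow> real) \<Rightarrow> real" where
  "Fk k x = Max ((fcomp k x) ` {1..dimk k})"

end

theory Submission
  imports Defs
begin

lemma key:
  fixes d s x :: real
  assumes d: "d \<ge> 4" and s: "s > 0" and x: "x > 0"
    and lt: "(1-s)/s * ((1-x)/x) < 3*(d-1)"
  shows "x > 1/d - 16*(d-1)/(3*d^2) * (s - 1/4)"
proof -
  have "(1-s)/s * ((1-x)/x) = ((1-s)*(1-x))/(s*x)" by simp
  with lt have h1: "(1-s)*(1-x) < 3*(d-1)*(s*x)"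
    using s x by (simp add: divide_less_eq)
  hence h2: "1 - s < x*(1+(3*d-4)*s)" by (simp add: algebra_simps)
  have id: "(1-s) - (1+(3*d-4)*s)*(1/d - 16*(d-1)/(3*d^2)*(s-1/4))
      = 16*(3*d-4)*(3*d-3)*(s-1/4)^2/(9*d^2)"
    using d by (simp add: field_simps power2_eq_square)
  have "16*(3*d-4)*(3*d-3)*(s-1/4)^2/(9*d^2) \<ge> 0" using d by simp
  with id have h3: "(1+(3*d-4)*s)*(1/d - 16*(d-1)/(3*d^2)*(s-1/4)) \<le> 1 - s" by linarith
  have pos: "1+(3*d-4)*s > 0" using d s by (simp add: add_pos_nonneg)
  from h2 h3 have "(1+(3*d-4)*s)*(1/d - 16*(d-1)/(3*d^2)*(s-1/4)) < (1+(3*d-4)*s) * x"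
    by (simp add: mult.commute)
  with pos show ?thesis by simp
qed

lemma sum_jidx:
  fixes h :: "nat \<Rightarrow> real"
  shows "(\<Sum>i=1..4*m. h (jidx i)) = real m * (h 1 + h 2 + h 3 + h 4)"
proof (induction m)
  case 0
  then show ?case by simp
next
  case (Suc m)
  have e: "4 * Suc m = Suc (Suc (Suc (Suc (4*m))))" by simp
  have j1: "jidx (Suc (4*m)) = 4" and j2: "jidx (Suc (Suc (4*m))) = 3"
    and j3: "jidx (Suc (Suc (Suc (4*m)))) = 2" and j4: "jidx (Suc (Suc (Suc (Suc (4*m))))) = 1"
  proof -
    have "Suc (4*m) mod 4 = 1" "Suc (Suc (4*m)) mod 4 = 2" "Suc (Suc (Suc (4*m))) mod 4 = 3"
      "Suc (Suc (Suc (Suc (4*m)))) mod 4 = 0" by presburger+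
    then show "jidx (Suc (4*m)) = 4" "jidx (Suc (Suc (4*m))) = 3"
      "jidx (Suc (Suc (Suc (4*m)))) = 2" "jidx (Suc (Suc (Suc (Suc (4*m))))) = 1"
      by (simp_all add: jidx_def)
  qed
  show ?case unfolding e using Suc j1 j2 j3 j4
    by (simp add: sum.cl_ivl_Suc algebra_simps)
qed

lemma sum_blocks:
  fixes x :: "nat \<Rightarrow> real"
  shows "(\<Sum>j=1..n. (\<Sum>l=(j-1)*m+1..j*m. x l)) = (\<Sum>l=1..n*m. x l)"
proof (induction n)
  case 0
  then show ?case by simp
next
  case (Suc n)
  have "{1..Suc n * m} = {1..n*m} \<union> {n*m+1..Suc n * m}" by auto
  moreover have "{1..n*m} \<inter> {n*m+1..Suc n * m} = {}" by auto
  ultimately have "(\<Sum>l=1..Suc n*m. x l) = (\<Sum>l=1..n*m. x l) + (\<Sum>l=n*m+1..Suc n*m. x l)"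
    by (simp add: sum.union_disjoint)
  then show ?case using Suc by simp
qed

theorem mainTheorem11:
  fixes k :: nat
  assumes "k \<ge> 2"
  shows "(INF x\<in>simplex k. Fk k x) = 12 * 3 ^ (k - 1) - 3
         \<and> (\<lambda>i. 1 / real (dimk k)) \<in> simplex k
         \<and> Fk k (\<lambda>i. 1 / real (dimk k)) = 12 * 3 ^ (k - 1) - 3"
proof -
  define m :: nat where "m = 3^(k-1)"
  have m1: "m \<ge> 1" unfolding m_def by simp
  have dk: "dimk k = 4*m" unfolding dimk_def m_def by simp
  define d :: real where "d = real (dimk k)"
  have dd: "d = 4 * real m" unfolding d_def dk by simp
  have d4: "d \<ge> 4" using m1 dd by simp
  have C: "(12 * 3 ^ (k - 1) - 3 :: real) = 3*(d-1)" unfolding dd m_def by simp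
  have bs_block: "blocksum k x j = (\<Sum>l=(j-1)*m+1..j*m. x l)" for x j
    unfolding blocksum_def m_def by simp
  have bsum: "(\<Sum>j=1..4. blocksum k x j) = (\<Sum>l=1..dimk k. x l)" for x
    unfolding bs_block dk using sum_blocks[where n=4 and m=m and x=x] by (simp add: mult.commute)
  define b where "b = (\<lambda>i::nat. 1 / real (dimk k))"
  have bmem: "b \<in> simplex k"
    unfolding simplex_def b_def using m1 dk by auto
  have bblock: "blocksum k b j = 1/4" if "j \<ge> 1" for j
  proof -
    have "card {(j-1)*m+1..j*m} = m" using that
      by (cases j) (auto simp: algebra_simps)
    then show ?thesis unfolding bs_block b_def dk using m1 by simp
  qed
  have fb: "fcomp k b i = 3*(d-1)" if "i \<in> {1..dimk k}" for i
  proof -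
    have "jidx i \<ge> 1" unfolding jidx_def by simp
    then have "blocksum k b (jidx i) = 1/4" by (rule bblock)
    moreover have "sigma (1/d) = d - 1" unfolding sigma_def using d4 by (simp add: field_simps)
    ultimately show ?thesis unfolding fcomp_def sigma_def b_def d_def[symmetric]
      by (simp add: field_simps)
  qed
  have ne: "{1..dimk k} \<noteq> {}" using dk m1 by simp
  have Fb: "Fk k b = 3*(d-1)"
  proof -
    have "fcomp k b ` {1..dimk k} = {3*(d-1)}" using fb ne by auto
    then show ?thesis unfolding Fk_def by simp
  qed
  have lower: "3*(d-1) \<le> Fk k x" if xs: "x \<in> simplex k" for x
  proof (rule ccontr)
    assume "\<not> 3*(d-1) \<le> Fk k x"
    hence lt: "Fk k x < 3*(d-1)" by simp
    have xpos: "\<And>i. i \<in> {1..dimk k} \<Longrightarrow> x i > 0" and xsum: "(\<Sum>i=1..dimk k. x i) = 1"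
      using xs unfolding simplex_def by auto
    have Spos: "blocksum k x j > 0" if "j \<ge> 1" "j \<le> 4" for j
    proof -
      have sub: "{(j-1)*m+1..j*m} \<subseteq> {1..dimk k}" using that dk
        by (auto simp: mult_le_mono1)
      have "{(j-1)*m+1..j*m} \<noteq> {}" using that m1 by (cases j) auto
      then show ?thesis unfolding bs_block using sub xpos
        by (intro sum_pos) auto
    qed
    define c where "c = 16*(d-1)/(3*d^2)"
    define L where "L = (\<lambda>s. 1/d - c * (s - 1/4))"
    have each: "x i > L (blocksum k x (jidx i))" if i: "i \<in> {1..dimk k}" for i
    proof -
      have "fcomp k x i \<le> Fk k x" unfolding Fk_def using i by (intro Max_ge) auto
      with lt have "fcomp k x i < 3*(d-1)" by simp
      moreover have "jidx i \<ge> 1" "jidx i \<le> 4" unfolding jidx_def by auto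
      ultimately show ?thesis unfolding L_def c_def fcomp_def sigma_def
        using key[OF d4 Spos xpos[OF i]] by blast
    qed
    have "(\<Sum>i=1..dimk k. L (blocksum k x (jidx i))) < (\<Sum>i=1..dimk k. x i)"
      using each ne by (intro sum_strict_mono) auto
    also have "\<dots> = 1" by (rule xsum)
    finally have A: "(\<Sum>i=1..dimk k. L (blocksum k x (jidx i))) < 1" .
    have "(\<Sum>i=1..dimk k. L (blocksum k x (jidx i)))
        = real m * (L (blocksum k x 1) + L (blocksum k x 2) + L (blocksum k x 3) + L (blocksum k x 4))"
      unfolding dk by (rule sum_jidx)
    also have "\<dots> = real m * (4/d - c * ((blocksum k x 1 + blocksum k x 2 + blocksum k x 3 + blocksum k x 4) - 1))"
      unfolding L_def by (simp add: algebra_simps)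
    also have "blocksum k x 1 + blocksum k x 2 + blocksum k x 3 + blocksum k x 4 = 1"
      using bsum[of x] xsum by (simp add: numeral_eq_Suc)
    also have "real m * (4/d - c * (1 - 1)) = 1" using dd m1 by simp
    finally show False using A by simp
  qed
  have inf: "(INF x\<in>simplex k. Fk k x) = 3*(d-1)"
  proof -
    have "Fk k ` simplex k \<noteq> {}" using bmem by auto
    show ?thesis
      by (rule cInf_eq_minimum) (use bmem Fb lower in \<open>auto intro: image_eqI[where x=b]\<close>)
  qed
  show ?thesis unfolding C using inf bmem Fb unfolding b_def d_def by simp
qed

end
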